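(* The categorical algebra $\Delta_\Bbbk$ is a free right $\Omega$-module, where $\Omega\subseteq\Delta_\Bbbk$ is the unital subalgebra generated by the elements $1_n$ and $d_{0,n}$, $n\in\mathbb{N}$.
   Context: $\Bbbk$ is a field. $\Delta$ is the skeletal category of finite well-ordered sets $[n]=\{0<\cdots<n\}$ with order-preserving maps, with generating coface maps $\partial^n_i\colon[n]\to[n+1]$ and codegeneracy maps $\sigma^n_i\colon[n+1]\to[n]$. The categorical algebra $\Delta_\Bbbk$ (also written $\Delta$) is the $\Bbbk$-algebra with basis the morphisms of $\Delta$, multiplication given by composition when composable and $0$ otherwise; $1_n$ is the identity of $[n]$. For $0\le i\le n$, $d_{i,n}=\sum_{j=i}^n(-1)^j\partial^n_j$; in particular $d_{0,n}=\sum_{i=0}^n(-1)^i\partial^n_i$. Right $\Omega$-modules are chain complexes of $\Bbbk$-vector spaces. *)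

theory Defs
  imports Main
begin

text \<open>A morphism [m] -> [n] of the simplex category is encoded as a triple (m, n, f)
  with f monotone on {0..m}, f maps {0..m} into {0..n}, and f i = 0 for i > m
  (so the encoding is unique).\<close>

type_synonym mor = "nat \<times> nat \<times> (nat \<Rightarrow> nat)"

definition src :: "mor \<Rightarrow> nat" where "src \<phi> = fst \<phi>"
definition tgt :: "mor \<Rightarrow> nat" where "tgt \<phi> = fst (snd \<phi>)"
definition fn :: "mor \<Rightarrow> nat \<Rightarrow> nat" where "fn \<phi> = snd (snd \<phi>)"

definition valid_mor :: "mor \<Rightarrow> bool" where
  "valid_mor \<phi> \<longleftrightarrow>
     (\<forall>i\<le>src \<phi>. fn \<phi> i \<le> tgt \<phi>) \<and>
     (\<forall>i j. i \<le> j \<longrightarrow> j \<le> src \<phi> \<longrightarrow> fn \<phi> i \<le> fn \<phi> j) \<and>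
     (\<forall>i. src \<phi> < i \<longrightarrow> fn \<phi> i = 0)"

definition mcomp :: "mor \<Rightarrow> mor \<Rightarrow> mor" where
  "mcomp \<phi> \<chi> = (src \<chi>, tgt \<phi>, \<lambda>i. if i \<le> src \<chi> then fn \<phi> (fn \<chi> i) else 0)"

text \<open>Elements of the categorical algebra: finitely supported k-linear combinations of morphisms.\<close>
definition supp :: "(mor \<Rightarrow> 'k::field) \<Rightarrow> mor set" where
  "supp x = {\<phi>. x \<phi> \<noteq> 0}"

definition delta_alg :: "(mor \<Rightarrow> 'k::field) set" where
  "delta_alg = {x. finite (supp x) \<and> (\<forall>\<phi>. x \<phi> \<noteq> 0 \<longrightarrow> valid_mor \<phi>)}"

definition dmult :: "(mor \<Rightarrow> 'k::field) \<Rightarrow> (mor \<Rightarrow> 'k) \<Rightarrow> (mor \<Rightarrow> 'k)" where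
  "dmult x y = (\<lambda>\<psi>. \<Sum>\<phi>\<in>supp x. \<Sum>\<chi>\<in>supp y.
      if tgt \<chi> = src \<phi> \<and> mcomp \<phi> \<chi> = \<psi> then x \<phi> * y \<chi> else 0)"

definition bas :: "mor \<Rightarrow> (mor \<Rightarrow> 'k::field)" where
  "bas \<phi> = (\<lambda>\<psi>. if \<psi> = \<phi> then 1 else 0)"

definition ident :: "nat \<Rightarrow> (mor \<Rightarrow> 'k::field)" where
  "ident n = bas (n, n, \<lambda>i. if i \<le> n then i else 0)"

definition coface_mor :: "nat \<Rightarrow> nat \<Rightarrow> mor" where
  "coface_mor n i = (n, Suc n, \<lambda>j. if j \<le> n then (if j < i then j else Suc j) else 0)"

definition d0 :: "nat \<Rightarrow> (mor \<Rightarrow> 'k::field)" where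
  "d0 n = (\<lambda>\<psi>. \<Sum>i\<le>n. (-1) ^ i * bas (coface_mor n i) \<psi>)"

inductive_set Omega :: "(mor \<Rightarrow> 'k::field) set" where
  gen_id: "ident n \<in> Omega"
| gen_d: "d0 n \<in> Omega"
| zero: "(\<lambda>_. 0) \<in> Omega"
| add: "x \<in> Omega \<Longrightarrow> y \<in> Omega \<Longrightarrow> (\<lambda>\<psi>. x \<psi> + y \<psi>) \<in> Omega"
| smult: "x \<in> Omega \<Longrightarrow> (\<lambda>\<psi>. c * x \<psi>) \<in> Omega"
| mult: "x \<in> Omega \<Longrightarrow> y \<in> Omega \<Longrightarrow> dmult x y \<in> Omega"

text \<open>A subset M of the categorical algebra, with right Omega-action given by multiplication,
  is a free right Omega-module: it is a direct sum of copies of the modules 1_n Omega,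
  i.e. there is a set B of generators, each b labelled by an object n_b with b 1_{n_b} = b,
  such that every element of M is uniquely a finite sum sum_b b w_b with w_b in 1_{n_b} Omega.\<close>
definition free_right_Omega_module :: "(mor \<Rightarrow> 'k::field) set \<Rightarrow> bool" where
  "free_right_Omega_module M \<longleftrightarrow>
    (\<forall>x\<in>M. \<forall>w\<in>Omega. dmult x w \<in> M) \<and>
    (\<exists>B lab. B \<subseteq> M \<and> (\<forall>b\<in>B. dmult b (ident (lab b)) = b) \<and>
      (\<forall>x\<in>M. \<exists>!w :: (mor \<Rightarrow> 'k) \<Rightarrow> (mor \<Rightarrow> 'k).
         (\<forall>b. b \<notin> B \<longrightarrow> w b = (\<lambda>_. 0)) \<and>
         finite {b\<in>B. w b \<noteq> (\<lambda>_. 0)} \<and>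
         (\<forall>b\<in>B. w b \<in> Omega \<and> dmult (ident (lab b)) (w b) = w b) \<and>
         x = (\<lambda>\<psi>. \<Sum>b\<in>{b\<in>B. w b \<noteq> (\<lambda>_. 0)}. dmult b (w b) \<psi>)))"

end

theory Submission
  imports Defs
begin


lemma src_simp[simp]: "src (a,b,f) = a" by (simp add: src_def)
lemma tgt_simp[simp]: "tgt (a,b,f) = b" by (simp add: tgt_def)
lemma fn_simp[simp]: "fn (a,b,f) = f" by (simp add: fn_def)
lemma mor_eta: "\<phi> = (src \<phi>, tgt \<phi>, fn \<phi>)" by (simp add: src_def tgt_def fn_def)

definition idm :: "nat \<Rightarrow> mor" where "idm n = (n, n, \<lambda>i. if i \<le> n then i else 0)"
lemma ident_idm: "ident n = bas (idm n)" by (simp add: ident_def idm_def)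

abbreviation cf where "cf \<equiv> coface_mor"

lemma src_mcomp[simp]: "src (mcomp \<phi> \<chi>) = src \<chi>" by (simp add: mcomp_def)
lemma tgt_mcomp[simp]: "tgt (mcomp \<phi> \<chi>) = tgt \<phi>" by (simp add: mcomp_def)
lemma fn_mcomp: "fn (mcomp \<phi> \<chi>) = (\<lambda>i. if i \<le> src \<chi> then fn \<phi> (fn \<chi> i) else 0)" by (simp add: mcomp_def)
lemma src_cf[simp]: "src (cf n i) = n" by (simp add: coface_mor_def)
lemma tgt_cf[simp]: "tgt (cf n i) = Suc n" by (simp add: coface_mor_def)
lemma fn_cf: "fn (cf n i) = (\<lambda>j. if j \<le> n then (if j < i then j else Suc j) else 0)" by (simp add: coface_mor_def)
lemma src_idm[simp]: "src (idm n) = n" by (simp add: idm_def)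
lemma tgt_idm[simp]: "tgt (idm n) = n" by (simp add: idm_def)
lemma fn_idm: "fn (idm n) = (\<lambda>i. if i \<le> n then i else 0)" by (simp add: idm_def)

lemma mor_eqI: "src \<phi> = src \<psi> \<Longrightarrow> tgt \<phi> = tgt \<psi> \<Longrightarrow> (\<And>i. fn \<phi> i = fn \<psi> i) \<Longrightarrow> \<phi> = \<psi>"
  by (metis mor_eta ext)

lemma valid_mcomp: assumes "valid_mor \<phi>" "valid_mor \<chi>" "tgt \<chi> = src \<phi>" shows "valid_mor (mcomp \<phi> \<chi>)"
proof -
  have a: "\<forall>i\<le>src \<phi>. fn \<phi> i \<le> tgt \<phi>" "\<forall>i j. i \<le> j \<longrightarrow> j \<le> src \<phi> \<longrightarrow> fn \<phi> i \<le> fn \<phi> j"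
    and b: "\<forall>i\<le>src \<chi>. fn \<chi> i \<le> tgt \<chi>" "\<forall>i j. i \<le> j \<longrightarrow> j \<le> src \<chi> \<longrightarrow> fn \<chi> i \<le> fn \<chi> j"
    using assms unfolding valid_mor_def by auto
  show ?thesis unfolding valid_mor_def fn_mcomp
    using a b assms(3) by (auto simp: le_trans)
qed

lemma valid_cf: "i \<le> Suc n \<Longrightarrow> valid_mor (cf n i)"
  unfolding valid_mor_def fn_cf by auto

lemma valid_idm: "valid_mor (idm n)" unfolding valid_mor_def fn_idm by auto

lemma mcomp_id_right: "valid_mor \<phi> \<Longrightarrow> mcomp \<phi> (idm (src \<phi>)) = \<phi>"
  by (rule mor_eqI) (auto simp: fn_mcomp fn_idm valid_mor_def)

lemma mcomp_id_left: "valid_mor \<chi> \<Longrightarrow> tgt \<chi> = n \<Longrightarrow> mcomp (idm n) \<chi> = \<chi>"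
  by (rule mor_eqI) (auto simp: fn_mcomp fn_idm valid_mor_def)

lemma cf_inj: assumes "i \<le> n" "j \<le> n" "cf n i = cf n j" shows "i = j"
proof (rule ccontr)
  assume ne: "i \<noteq> j"
  show False
  proof (cases "i < j")
    case True
    have "fn (cf n i) i = fn (cf n j) i" using assms(3) by metis
    with True assms(1,2) show False by (simp add: fn_cf)
  next
    case False
    with ne have "j < i" by simp
    have "fn (cf n i) j = fn (cf n j) j" using assms(3) by metis
    with \<open>j < i\<close> assms(1,2) show False by (simp add: fn_cf)
  qed
qed

lemma idm_ne_cf[simp]: "idm k \<noteq> cf m i" "cf m i \<noteq> idm k"
  by (auto simp: idm_def coface_mor_def)

lemma supp_bas[simp]: "supp (bas \<phi> :: mor \<Rightarrow> 'k::field) = {\<phi>}" by (auto simp: supp_def bas_def)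
lemma bas_apply: "bas \<phi> \<psi> = (if \<psi> = \<phi> then 1 else 0)" by (simp add: bas_def)

lemma dmult_sup:
  fixes x y :: "mor \<Rightarrow> 'k::field"
  assumes "finite F" "supp x \<subseteq> F" "finite G" "supp y \<subseteq> G"
  shows "dmult x y \<psi> = (\<Sum>\<phi>\<in>F. \<Sum>\<chi>\<in>G. if tgt \<chi> = src \<phi> \<and> mcomp \<phi> \<chi> = \<psi> then x \<phi> * y \<chi> else 0)"
proof -
  have "dmult x y \<psi> = (\<Sum>\<phi>\<in>supp x. \<Sum>\<chi>\<in>G. if tgt \<chi> = src \<phi> \<and> mcomp \<phi> \<chi> = \<psi> then x \<phi> * y \<chi> else 0)"
    unfolding dmult_def
    by (rule sum.cong[OF refl], rule sum.mono_neutral_left) (use assms in \<open>auto simp: supp_def\<close>)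
  also have "\<dots> = (\<Sum>\<phi>\<in>F. \<Sum>\<chi>\<in>G. if tgt \<chi> = src \<phi> \<and> mcomp \<phi> \<chi> = \<psi> then x \<phi> * y \<chi> else 0)"
    by (rule sum.mono_neutral_left) (use assms in \<open>auto simp: supp_def intro: sum.neutral\<close>)
  finally show ?thesis .
qed

abbreviation fs :: "(mor \<Rightarrow> 'k::field) \<Rightarrow> bool" where "fs x \<equiv> finite (supp x)"

lemma dmult_lin_right:
  fixes x y z :: "mor \<Rightarrow> 'k::field"
  assumes "fs x" "fs y" "fs z"
  shows "dmult x (\<lambda>\<psi>. a * y \<psi> + c * z \<psi>) = (\<lambda>\<psi>. a * dmult x y \<psi> + c * dmult x z \<psi>)"
proof
  fix \<psi>
  let ?G = "supp y \<union> supp z"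
  have s: "supp (\<lambda>\<psi>. a * y \<psi> + c * z \<psi>) \<subseteq> ?G" by (auto simp: supp_def)
  show "dmult x (\<lambda>\<psi>. a * y \<psi> + c * z \<psi>) \<psi> = a * dmult x y \<psi> + c * dmult x z \<psi>"
    using assms s
    apply (simp add: dmult_sup[of "supp x" x ?G] sum_distrib_left sum.distrib[symmetric])
    apply (intro sum.cong refl)
    by (auto simp: algebra_simps)
qed

lemma dmult_lin_left:
  fixes x y z :: "mor \<Rightarrow> 'k::field"
  assumes "fs x" "fs y" "fs z"
  shows "dmult (\<lambda>\<psi>. a * x \<psi> + y \<psi>) z = (\<lambda>\<psi>. a * dmult x z \<psi> + dmult y z \<psi>)"
proof
  fix \<psi>
  let ?F = "supp x \<union> supp y"
  have s: "supp (\<lambda>\<psi>. a * x \<psi> + y \<psi>) \<subseteq> ?F" by (auto simp: supp_def)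
  show "dmult (\<lambda>\<psi>. a * x \<psi> + y \<psi>) z \<psi> = a * dmult x z \<psi> + dmult y z \<psi>"
    using assms s
    apply (simp add: dmult_sup[of ?F _ "supp z"] sum_distrib_left sum.distrib[symmetric])
    apply (intro sum.cong refl)
    by (auto simp: algebra_simps)
qed

lemma dmult_zero_left[simp]: "dmult (\<lambda>_. 0) y = (\<lambda>_. (0::'k::field))"
  by (simp add: dmult_def supp_def)
lemma dmult_zero_right[simp]: "dmult x (\<lambda>_. 0) = (\<lambda>_. (0::'k::field))"
  by (simp add: dmult_def supp_def)



lemma bas_self[simp]: "bas \<phi> \<phi> = (1::'k::field)" by (simp add: bas_def)

lemma d0_apply: "d0 n \<psi> = (\<Sum>i\<le>n. if \<psi> = cf n i then (-1)^i else (0::'k::field))"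
  unfolding d0_def bas_def by (intro sum.cong) auto

lemma d0_cf: assumes "i \<le> m" shows "d0 n (cf m i) = (if m = n then (-1)^i else (0::'k::field))"
proof (cases "m = n")
  case True
  have "d0 n (cf m i) = (\<Sum>j\<le>n. if j = i then (-1)^j else (0::'k))"
    unfolding d0_apply using True assms cf_inj[of i n] by (intro sum.cong refl) auto
  also have "\<dots> = (-1)^i" using True assms by simp
  finally show ?thesis using True by simp
next
  case False
  then have "\<And>j. cf m i \<noteq> cf n j" by (metis src_cf)
  then show ?thesis using False unfolding d0_apply by simp
qed

lemma d0_out: "\<psi> \<notin> cf n ` {..n} \<Longrightarrow> d0 n \<psi> = (0::'k::field)"
  unfolding d0_apply by (intro sum.neutral) auto

lemma supp_d0: "supp (d0 n :: mor \<Rightarrow> 'k::field) \<subseteq> cf n ` {..n}"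
  using d0_out unfolding supp_def by blast

lemma fs_d0: "fs (d0 n :: mor \<Rightarrow> 'k::field)" using supp_d0 finite_subset by blast
lemma fs_ident: "fs (ident n :: mor \<Rightarrow> 'k::field)" by (simp add: ident_idm)
lemma supp_ident: "supp (ident n :: mor \<Rightarrow> 'k::field) = {idm n}" by (simp add: ident_idm)

lemma dmult_bas_left:
  fixes y :: "mor \<Rightarrow> 'k::field"
  assumes "finite G" "supp y \<subseteq> G"
  shows "dmult (bas \<phi>) y \<psi> = (\<Sum>\<chi>\<in>G. if tgt \<chi> = src \<phi> \<and> mcomp \<phi> \<chi> = \<psi> then y \<chi> else 0)"
  using dmult_sup[of "{\<phi>}" "bas \<phi>" G y \<psi>] assms by (simp cong: if_cong)

lemma dmult_bas_right:
  fixes x :: "mor \<Rightarrow> 'k::field"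
  assumes "finite F" "supp x \<subseteq> F"
  shows "dmult x (bas \<chi>) \<psi> = (\<Sum>\<phi>\<in>F. if tgt \<chi> = src \<phi> \<and> mcomp \<phi> \<chi> = \<psi> then x \<phi> else 0)"
  using dmult_sup[of F x "{\<chi>}" "bas \<chi>" \<psi>] assms by (simp cong: if_cong)

lemma dmult_bas_bas: "dmult (bas \<phi>) (bas \<chi>) = (if tgt \<chi> = src \<phi> then bas (mcomp \<phi> \<chi>) else (\<lambda>_. 0::'k::field))"
  by (rule ext) (simp add: dmult_bas_left[of "{\<chi>}" "bas \<chi>"] bas_apply)

lemma dmult_d0_right:
  "dmult (bas \<phi>) (d0 m) \<psi> = (\<Sum>i\<le>m. if Suc m = src \<phi> \<and> mcomp \<phi> (cf m i) = \<psi> then (-1)^i else (0::'k::field))"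
proof -
  have inj: "inj_on (cf m) {..m}" by (rule inj_onI) (auto intro: cf_inj)
  have "dmult (bas \<phi>) (d0 m) \<psi> = (\<Sum>\<chi>\<in>cf m ` {..m}. if tgt \<chi> = src \<phi> \<and> mcomp \<phi> \<chi> = \<psi> then d0 m \<chi> else (0::'k))"
    by (rule dmult_bas_left) (auto simp: supp_d0)
  also have "\<dots> = (\<Sum>i\<le>m. if Suc m = src \<phi> \<and> mcomp \<phi> (cf m i) = \<psi> then d0 m (cf m i) else 0)"
    by (simp add: sum.reindex[OF inj])
  also have "\<dots> = (\<Sum>i\<le>m. if Suc m = src \<phi> \<and> mcomp \<phi> (cf m i) = \<psi> then (-1)^i else 0)"
    by (intro sum.cong refl) (simp add: d0_cf)
  finally show ?thesis .
qed

lemma dmult_d0_left: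
  "dmult (d0 n) (bas \<chi>) \<psi> = (\<Sum>i\<le>n. if tgt \<chi> = n \<and> mcomp (cf n i) \<chi> = \<psi> then (-1)^i else (0::'k::field))"
proof -
  have inj: "inj_on (cf n) {..n}" by (rule inj_onI) (auto intro: cf_inj)
  have "dmult (d0 n) (bas \<chi>) \<psi> = (\<Sum>\<phi>\<in>cf n ` {..n}. if tgt \<chi> = src \<phi> \<and> mcomp \<phi> \<chi> = \<psi> then d0 n \<phi> else (0::'k))"
    by (rule dmult_bas_right) (auto simp: supp_d0)
  also have "\<dots> = (\<Sum>i\<le>n. if tgt \<chi> = n \<and> mcomp (cf n i) \<chi> = \<psi> then d0 n (cf n i) else 0)"
    by (simp add: sum.reindex[OF inj])
  also have "\<dots> = (\<Sum>i\<le>n. if tgt \<chi> = n \<and> mcomp (cf n i) \<chi> = \<psi> then (-1)^i else 0)"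
    by (intro sum.cong refl) (simp add: d0_cf)
  finally show ?thesis .
qed

lemma dmult_d0_d0:
  "dmult (d0 n) (d0 m) \<psi> = (\<Sum>i\<le>n. \<Sum>j\<le>m. if Suc m = n \<and> mcomp (cf n i) (cf m j) = \<psi> then (-1)^i * (-1)^j else (0::'k::field))"
proof -
  have injn: "inj_on (cf n) {..n}" by (rule inj_onI) (auto intro: cf_inj)
  have injm: "inj_on (cf m) {..m}" by (rule inj_onI) (auto intro: cf_inj)
  have "dmult (d0 n) (d0 m) \<psi> = (\<Sum>\<phi>\<in>cf n ` {..n}. \<Sum>\<chi>\<in>cf m ` {..m}. if tgt \<chi> = src \<phi> \<and> mcomp \<phi> \<chi> = \<psi> then d0 n \<phi> * d0 m \<chi> else (0::'k))"
    by (rule dmult_sup) (auto simp: supp_d0)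
  also have "\<dots> = (\<Sum>i\<le>n. \<Sum>j\<le>m. if Suc m = n \<and> mcomp (cf n i) (cf m j) = \<psi> then d0 n (cf n i) * d0 m (cf m j) else 0)"
    by (simp add: sum.reindex[OF injn] sum.reindex[OF injm])
  also have "\<dots> = (\<Sum>i\<le>n. \<Sum>j\<le>m. if Suc m = n \<and> mcomp (cf n i) (cf m j) = \<psi> then (-1)^i * (-1)^j else 0)"
    by (intro sum.cong refl) (simp add: d0_cf)
  finally show ?thesis .
qed

lemma gp1: "dmult (ident n) (ident m) = (if n = m then ident n else (\<lambda>_. 0::'k::field))"
  by (simp add: ident_idm dmult_bas_bas mcomp_id_left valid_idm)

lemma gp2: "dmult (ident n) (d0 m) = (if Suc m = n then d0 m else (\<lambda>_. 0::'k::field))"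
proof (rule ext)
  fix \<psi>
  have e: "\<And>i. i \<le> m \<Longrightarrow> mcomp (idm (Suc m)) (cf m i) = cf m i"
    by (rule mcomp_id_left) (auto intro: valid_cf)
  show "dmult (ident n) (d0 m) \<psi> = (if Suc m = n then d0 m else (\<lambda>_. 0::'k::field)) \<psi>"
    unfolding ident_idm dmult_d0_right d0_apply
    by (cases "Suc m = n") (auto intro!: sum.cong simp: e)
qed

lemma gp3: "dmult (d0 n) (ident m) = (if m = n then d0 n else (\<lambda>_. 0::'k::field))"
proof (rule ext)
  fix \<psi>
  have e: "\<And>i. i \<le> n \<Longrightarrow> mcomp (cf n i) (idm n) = cf n i"
    using mcomp_id_right valid_cf by (metis le_SucI src_cf)
  show "dmult (d0 n) (ident m) \<psi> = (if m = n then d0 n else (\<lambda>_. 0::'k::field)) \<psi>"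
    unfolding ident_idm dmult_d0_left d0_apply
    by (cases "m = n") (auto intro!: sum.cong simp: e)
qed

lemma cf_cf: "i \<le> j \<Longrightarrow> j \<le> m \<Longrightarrow> mcomp (cf (Suc m) (Suc j)) (cf m i) = mcomp (cf (Suc m) i) (cf m j)"
  by (rule mor_eqI) (auto simp: fn_mcomp fn_cf)

lemma gp4: "dmult (d0 n) (d0 m) = (\<lambda>_. 0::'k::field)"
proof (rule ext)
  fix \<psi>
  show "dmult (d0 n) (d0 m) \<psi> = (0::'k)"
  proof (cases "Suc m = n")
    case False
    then show ?thesis by (simp add: dmult_d0_d0)
  next
    case True
    define T where "T = (\<lambda>(i,j). if mcomp (cf (Suc m) i) (cf m j) = \<psi> then (-1)^i * (-1)^j else (0::'k))"
    define A where "A = {(i,j). i \<le> j \<and> j \<le> m}"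
    define B where "B = {(i::nat,j::nat). j < i \<and> i \<le> Suc m}"
    have fA: "finite A" by (rule finite_subset[of _ "{..m} \<times> {..m}"]) (auto simp: A_def)
    have fB: "finite B" by (rule finite_subset[of _ "{..Suc m} \<times> {..m}"]) (auto simp: B_def)
    have "dmult (d0 n) (d0 m) \<psi> = (\<Sum>i\<le>Suc m. \<Sum>j\<le>m. T (i,j))"
      using True by (simp add: dmult_d0_d0 T_def)
    also have "\<dots> = sum T ({..Suc m} \<times> {..m})" by (simp add: sum.cartesian_product)
    also have "{..Suc m} \<times> {..m} = A \<union> B" by (auto simp: A_def B_def)
    also have "sum T (A \<union> B) = sum T A + sum T B"
      by (rule sum.union_disjoint) (use fA fB in \<open>auto simp: A_def B_def\<close>)
    also have "sum T B = sum (T \<circ> (\<lambda>(i,j). (Suc j, i))) A"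
    proof -
      have inj: "inj_on (\<lambda>(i,j). (Suc j, i)) A" by (auto simp: inj_on_def)
      have img: "(\<lambda>(i,j). (Suc j, i)) ` A = B"
      proof
        show "(\<lambda>(i,j). (Suc j, i)) ` A \<subseteq> B" by (auto simp: A_def B_def)
        show "B \<subseteq> (\<lambda>(i,j). (Suc j, i)) ` A"
        proof
          fix p assume "p \<in> B"
          then obtain i j where p: "p = (i,j)" "j < i" "i \<le> Suc m" by (auto simp: B_def)
          then have "(j, i - 1) \<in> A" "p = (\<lambda>(i,j). (Suc j, i)) (j, i - 1)" by (auto simp: A_def)
          then show "p \<in> (\<lambda>(i,j). (Suc j, i)) ` A" by blast
        qed
      qed
      show ?thesis using sum.reindex[OF inj] img by simp
    qed
    also have "sum (T \<circ> (\<lambda>(i,j). (Suc j, i))) A = sum (\<lambda>p. - T p) A"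
    proof (rule sum.cong[OF refl])
      fix p assume "p \<in> A"
      then obtain i j where p: "p = (i,j)" "i \<le> j" "j \<le> m" by (auto simp: A_def)
      show "(T \<circ> (\<lambda>(i,j). (Suc j, i))) p = - T p"
        using p cf_cf[OF p(2,3)] by (simp add: T_def)
    qed
    finally show ?thesis by (simp add: sum_negf)
  qed
qed



definition PP :: "(mor \<Rightarrow> 'k::field) \<Rightarrow> bool" where
"PP w \<longleftrightarrow> fs w \<and> (\<forall>\<psi>. w \<psi> \<noteq> 0 \<longrightarrow> (\<exists>n. \<psi> = idm n) \<or> (\<exists>n i. i \<le> n \<and> \<psi> = cf n i)) \<and>
   (\<forall>n i. i \<le> n \<longrightarrow> w (cf n i) = (-1)^i * w (cf n 0))"

inductive_set QQ :: "(mor \<Rightarrow> 'k::field) set" where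
  Q0: "(\<lambda>_. 0) \<in> QQ"
| Qi: "q \<in> QQ \<Longrightarrow> (\<lambda>\<psi>. c * ident n \<psi> + q \<psi>) \<in> QQ"
| Qd: "q \<in> QQ \<Longrightarrow> (\<lambda>\<psi>. c * d0 n \<psi> + q \<psi>) \<in> QQ"

lemma ident_apply: "ident n \<psi> = (if \<psi> = idm n then 1 else (0::'k::field))"
  by (simp add: ident_idm bas_apply)

lemma d0_idm[simp]: "d0 m (idm k) = (0::'k::field)"
  by (rule d0_out) auto

lemma ident_cf[simp]: "ident n (cf m i) = (0::'k::field)" by (simp add: ident_apply)

lemma QQ_PP: "q \<in> QQ \<Longrightarrow> PP q"
proof (induction rule: QQ.induct)
  case Q0
  then show ?case by (simp add: PP_def supp_def)
next
  case (Qi q c n)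
  have f: "supp (\<lambda>\<psi>. c * ident n \<psi> + q \<psi>) \<subseteq> {idm n} \<union> supp q"
    by (auto simp: supp_def ident_apply)
  have fq: "fs q" "\<And>\<psi>. q \<psi> \<noteq> 0 \<Longrightarrow> (\<exists>n. \<psi> = idm n) \<or> (\<exists>n i. i \<le> n \<and> \<psi> = cf n i)"
     "\<And>m i. i \<le> m \<Longrightarrow> q (cf m i) = (-1)^i * q (cf m 0)"
    using Qi unfolding PP_def by blast+
  have s1: "(\<exists>n. \<psi> = idm n) \<or> (\<exists>n i. i \<le> n \<and> \<psi> = cf n i)" if "c * ident n \<psi> + q \<psi> \<noteq> 0" for \<psi>
  proof (cases "\<psi> = idm n")
    case False
    then have "q \<psi> \<noteq> 0" using that by (simp add: ident_apply)
    then show ?thesis by (rule fq(2))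
  qed auto
  have s2: "c * ident n (cf m i) + q (cf m i) = (-1)^i * (c * ident n (cf m 0) + q (cf m 0))" if "i \<le> m" for m i
    using fq(3)[OF that] by simp
  show ?case unfolding PP_def using finite_subset[OF f] fq(1) s1 s2 by blast
next
  case (Qd q c n)
  have f: "supp (\<lambda>\<psi>. c * d0 n \<psi> + q \<psi>) \<subseteq> cf n ` {..n} \<union> supp q"
  proof
    fix \<psi> assume "\<psi> \<in> supp (\<lambda>\<psi>. c * d0 n \<psi> + q \<psi>)"
    then have "c * d0 n \<psi> + q \<psi> \<noteq> 0" by (simp add: supp_def)
    then show "\<psi> \<in> cf n ` {..n} \<union> supp q" using d0_out[of \<psi> n] by (auto simp: supp_def)
  qed
  have fq: "fs q" "\<And>\<psi>. q \<psi> \<noteq> 0 \<Longrightarrow> (\<exists>n. \<psi> = idm n) \<or> (\<exists>n i. i \<le> n \<and> \<psi> = cf n i)"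
     "\<And>m i. i \<le> m \<Longrightarrow> q (cf m i) = (-1)^i * q (cf m 0)"
    using Qd unfolding PP_def by blast+
  have s1: "(\<exists>n. \<psi> = idm n) \<or> (\<exists>n i. i \<le> n \<and> \<psi> = cf n i)" if "c * d0 n \<psi> + q \<psi> \<noteq> 0" for \<psi>
  proof (cases "\<psi> \<in> cf n ` {..n}")
    case False
    then have "q \<psi> \<noteq> 0" using that by (simp add: d0_out[OF False])
    then show ?thesis by (rule fq(2))
  qed auto
  have s2: "c * d0 n (cf m i) + q (cf m i) = (-1)^i * (c * d0 n (cf m 0) + q (cf m 0))" if "i \<le> m" for m i
    using fq(3)[OF that] that by (simp add: d0_cf algebra_simps del: fq(3))
  show ?case unfolding PP_def using finite_subset[OF f] fq(1) s1 s2 by blast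
qed

lemma QQ_fs: "q \<in> QQ \<Longrightarrow> fs q" using QQ_PP PP_def by blast

lemma QQ_add: "x \<in> QQ \<Longrightarrow> y \<in> QQ \<Longrightarrow> (\<lambda>\<psi>. x \<psi> + y \<psi>) \<in> QQ"
proof (induction rule: QQ.induct)
  case Q0 then show ?case by simp
next
  case (Qi q c n)
  then have "(\<lambda>\<psi>. c * ident n \<psi> + (q \<psi> + y \<psi>)) \<in> QQ" by (intro QQ.Qi) simp
  then show ?case by (simp add: add.assoc)
next
  case (Qd q c n)
  then have "(\<lambda>\<psi>. c * d0 n \<psi> + (q \<psi> + y \<psi>)) \<in> QQ" by (intro QQ.Qd) simp
  then show ?case by (simp add: add.assoc)
qed

lemma QQ_smult: "x \<in> QQ \<Longrightarrow> (\<lambda>\<psi>. a * x \<psi>) \<in> QQ"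
proof (induction rule: QQ.induct)
  case Q0 then show ?case by (simp add: QQ.Q0)
next
  case (Qi q c n)
  then have "(\<lambda>\<psi>. (a * c) * ident n \<psi> + a * q \<psi>) \<in> QQ" by (intro QQ.Qi) simp
  then show ?case by (simp add: algebra_simps)
next
  case (Qd q c n)
  then have "(\<lambda>\<psi>. (a * c) * d0 n \<psi> + a * q \<psi>) \<in> QQ" by (intro QQ.Qd) simp
  then show ?case by (simp add: algebra_simps)
qed

lemma dmult_lin_right1:
  fixes x y z :: "mor \<Rightarrow> 'k::field"
  assumes "fs x" "fs y" "fs z"
  shows "dmult x (\<lambda>\<psi>. a * y \<psi> + z \<psi>) = (\<lambda>\<psi>. a * dmult x y \<psi> + dmult x z \<psi>)"
  using dmult_lin_right[OF assms, of a 1] by simp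

lemma QQ_ident_mult: "y \<in> QQ \<Longrightarrow> dmult (ident n) y \<in> QQ"
proof (induction rule: QQ.induct)
  case Q0 then show ?case by (simp add: QQ.Q0)
next
  case (Qi q c m)
  have e: "dmult (ident n) (\<lambda>\<psi>. c * ident m \<psi> + q \<psi>) = (\<lambda>\<psi>. c * dmult (ident n) (ident m) \<psi> + dmult (ident n) q \<psi>)"
    by (rule dmult_lin_right1) (use Qi QQ_fs fs_ident in auto)
  show ?case unfolding e gp1 using Qi by (auto intro: QQ.Qi)
next
  case (Qd q c m)
  have e: "dmult (ident n) (\<lambda>\<psi>. c * d0 m \<psi> + q \<psi>) = (\<lambda>\<psi>. c * dmult (ident n) (d0 m) \<psi> + dmult (ident n) q \<psi>)"
    by (rule dmult_lin_right1) (use Qd QQ_fs fs_ident fs_d0 in auto)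
  show ?case unfolding e gp2 using Qd by (auto intro: QQ.Qd)
qed

lemma QQ_d0_mult: "y \<in> QQ \<Longrightarrow> dmult (d0 n) y \<in> QQ"
proof (induction rule: QQ.induct)
  case Q0 then show ?case by (simp add: QQ.Q0)
next
  case (Qi q c m)
  have e: "dmult (d0 n) (\<lambda>\<psi>. c * ident m \<psi> + q \<psi>) = (\<lambda>\<psi>. c * dmult (d0 n) (ident m) \<psi> + dmult (d0 n) q \<psi>)"
    by (rule dmult_lin_right1) (use Qi QQ_fs fs_ident fs_d0 in auto)
  show ?case unfolding e gp3 using Qi by (auto intro: QQ.Qd)
next
  case (Qd q c m)
  have e: "dmult (d0 n) (\<lambda>\<psi>. c * d0 m \<psi> + q \<psi>) = (\<lambda>\<psi>. c * dmult (d0 n) (d0 m) \<psi> + dmult (d0 n) q \<psi>)"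
    by (rule dmult_lin_right1) (use Qd QQ_fs fs_d0 in auto)
  show ?case unfolding e gp4 using Qd by auto
qed

lemma QQ_mult: "x \<in> QQ \<Longrightarrow> y \<in> QQ \<Longrightarrow> dmult x y \<in> QQ"
proof (induction rule: QQ.induct)
  case Q0 then show ?case by (simp add: QQ.Q0)
next
  case (Qi q c n)
  have e: "dmult (\<lambda>\<psi>. c * ident n \<psi> + q \<psi>) y = (\<lambda>\<psi>. c * dmult (ident n) y \<psi> + dmult q y \<psi>)"
    by (rule dmult_lin_left) (use Qi QQ_fs fs_ident in auto)
  show ?case unfolding e
    using QQ_add[OF QQ_smult[OF QQ_ident_mult[OF Qi(3)]] Qi(2)[OF Qi(3)]] by simp
next
  case (Qd q c n)
  have e: "dmult (\<lambda>\<psi>. c * d0 n \<psi> + q \<psi>) y = (\<lambda>\<psi>. c * dmult (d0 n) y \<psi> + dmult q y \<psi>)"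
    by (rule dmult_lin_left) (use Qd QQ_fs fs_d0 in auto)
  show ?case unfolding e
    using QQ_add[OF QQ_smult[OF QQ_d0_mult[OF Qd(3)]] Qd(2)[OF Qd(3)]] by simp
qed

lemma Omega_QQ: "x \<in> Omega \<Longrightarrow> x \<in> QQ"
proof (induction rule: Omega.induct)
  case (gen_id n)
  have "(\<lambda>\<psi>. 1 * ident n \<psi> + (\<lambda>_. 0) \<psi>) \<in> QQ" by (rule QQ.Qi[OF QQ.Q0])
  then show ?case by simp
next
  case (gen_d n)
  have "(\<lambda>\<psi>. 1 * d0 n \<psi> + (\<lambda>_. 0) \<psi>) \<in> QQ" by (rule QQ.Qd[OF QQ.Q0])
  then show ?case by simp
next
  case zero then show ?case by (rule QQ.Q0)
next
  case (add x y) from add.IH show ?case by (rule QQ_add)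
next
  case (smult x c) from smult.IH show ?case by (rule QQ_smult)
next
  case (mult x y) from mult.IH show ?case by (rule QQ_mult)
qed

lemma L4:
  fixes w :: "mor \<Rightarrow> 'k::field"
  assumes P: "PP w" and id: "dmult (ident (Suc m)) w = w"
  shows "w = (\<lambda>\<psi>. w (idm (Suc m)) * ident (Suc m) \<psi> + w (cf m 0) * d0 m \<psi>)"
proof -
  have fw: "fs w" using P PP_def by blast
  have tg: "tgt \<psi> = Suc m" if nz: "w \<psi> \<noteq> 0" for \<psi>
  proof -
    have eq: "w \<psi> = (\<Sum>\<chi>\<in>supp w. if tgt \<chi> = Suc m \<and> mcomp (idm (Suc m)) \<chi> = \<psi> then w \<chi> else 0)"
      using dmult_bas_left[OF fw subset_refl, of "idm (Suc m)" \<psi>] id by (simp add: ident_idm)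
    from nz have "(\<Sum>\<chi>\<in>supp w. if tgt \<chi> = Suc m \<and> mcomp (idm (Suc m)) \<chi> = \<psi> then w \<chi> else 0) \<noteq> 0"
      unfolding eq[symmetric] .
    then obtain \<chi> where "(if tgt \<chi> = Suc m \<and> mcomp (idm (Suc m)) \<chi> = \<psi> then w \<chi> else 0) \<noteq> 0"
      by (rule sum.not_neutral_contains_not_neutral)
    then have "mcomp (idm (Suc m)) \<chi> = \<psi>" by (auto split: if_splits)
    then show ?thesis by auto
  qed
  show ?thesis
  proof (rule ext)
    fix \<psi>
    show "w \<psi> = w (idm (Suc m)) * ident (Suc m) \<psi> + w (cf m 0) * d0 m \<psi>"
    proof (cases "\<psi> = idm (Suc m)")
      case True then show ?thesis by (simp add: ident_apply)
    next
      case F1: False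
      show ?thesis
      proof (cases "\<psi> \<in> cf m ` {..m}")
        case True
        then obtain i where i: "i \<le> m" "\<psi> = cf m i" by auto
        have sg: "w (cf m i) = (-1)^i * w (cf m 0)" using P i(1) unfolding PP_def by blast
        show ?thesis using i(1) unfolding i(2) sg by (simp add: d0_cf mult.commute)
      next
        case False
        have "w \<psi> = 0"
        proof (rule ccontr)
          assume nz: "w \<psi> \<noteq> 0"
          with P consider (a) n where "\<psi> = idm n" | (b) n i where "i \<le> n" "\<psi> = cf n i"
            unfolding PP_def by blast
          then show False
          proof cases
            case a then show False using tg[OF nz] F1 by simp
          next
            case b then show False using tg[OF nz] False by auto
          qed
        qed
        then show ?thesis using F1 False by (simp add: ident_apply d0_out)
      qed
    qed
  qed
qed



definition zc :: "mor \<Rightarrow> nat" where "zc \<phi> = (LEAST k. src \<phi> \<le> k \<or> 0 < fn \<phi> k)"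

lemma zc_le: "zc \<phi> \<le> src \<phi>" unfolding zc_def by (rule Least_le) simp

lemma zc_zero: "k < zc \<phi> \<Longrightarrow> fn \<phi> k = 0"
  unfolding zc_def using not_less_Least by blast

lemma zc_pos: "zc \<phi> < src \<phi> \<Longrightarrow> 0 < fn \<phi> (zc \<phi>)"
proof -
  assume a: "zc \<phi> < src \<phi>"
  have "src \<phi> \<le> zc \<phi> \<or> 0 < fn \<phi> (zc \<phi>)" unfolding zc_def by (rule LeastI[of _ "src \<phi>"]) simp
  with a show ?thesis by simp
qed

lemma zc_eq: "k \<le> src \<phi> \<Longrightarrow> (\<forall>i<k. fn \<phi> i = 0) \<Longrightarrow> (k = src \<phi> \<or> 0 < fn \<phi> k) \<Longrightarrow> zc \<phi> = k"
  unfolding zc_def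
proof (rule Least_equality)
  assume a: "k \<le> src \<phi>" "\<forall>i<k. fn \<phi> i = 0" "k = src \<phi> \<or> 0 < fn \<phi> k"
  then show "src \<phi> \<le> k \<or> 0 < fn \<phi> k" by auto
  fix y assume y: "src \<phi> \<le> y \<or> 0 < fn \<phi> y"
  show "k \<le> y"
  proof (rule ccontr)
    assume "\<not> k \<le> y"
    then have "y < k" by simp
    then have "fn \<phi> y = 0" "\<not> src \<phi> \<le> y" using a by auto
    then show False using y by simp
  qed
qed

definition BM :: "mor set" where "BM = {\<phi>. valid_mor \<phi> \<and> odd (zc \<phi>)}"
definition EM :: "mor set" where "EM = {\<phi>. valid_mor \<phi> \<and> even (zc \<phi>)}"
definition tau :: "mor \<Rightarrow> mor" where "tau \<phi> = mcomp \<phi> (cf (src \<phi> - 1) 0)"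
definition hh :: "mor \<Rightarrow> mor" where
  "hh e = (Suc (src e), tgt e, \<lambda>k. if k = 0 then 0 else if k \<le> Suc (src e) then fn e (k - 1) else 0)"

lemma src_hh[simp]: "src (hh e) = Suc (src e)" by (simp add: hh_def)
lemma tgt_hh[simp]: "tgt (hh e) = tgt e" by (simp add: hh_def)
lemma fn_hh: "fn (hh e) = (\<lambda>k. if k = 0 then 0 else if k \<le> Suc (src e) then fn e (k - 1) else 0)" by (simp add: hh_def)

lemma K1: assumes "src \<phi> = Suc m" "i < zc \<phi>"
  shows "mcomp \<phi> (cf m i) = mcomp \<phi> (cf m 0)"
proof (rule mor_eqI)
  fix k
  show "fn (mcomp \<phi> (cf m i)) k = fn (mcomp \<phi> (cf m 0)) k"
  proof (cases "k < i")
    case True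
    then have "fn \<phi> k = 0" "fn \<phi> (Suc k) = 0" using assms zc_zero by auto
    then show ?thesis using True by (simp add: fn_mcomp fn_cf)
  qed (simp add: fn_mcomp fn_cf)
qed simp_all

lemma K2: assumes v: "valid_mor \<phi>" and s: "src \<phi> = Suc m" and zi: "zc \<phi> \<le> i" and im: "i \<le> m"
  shows "zc (mcomp \<phi> (cf m i)) = zc \<phi>"
proof (rule zc_eq)
  show "zc \<phi> \<le> src (mcomp \<phi> (cf m i))" using zi im by simp
  show "\<forall>j<zc \<phi>. fn (mcomp \<phi> (cf m i)) j = 0" using zi im zc_zero by (auto simp: fn_mcomp fn_cf)
  show "zc \<phi> = src (mcomp \<phi> (cf m i)) \<or> 0 < fn (mcomp \<phi> (cf m i)) (zc \<phi>)"
  proof (cases "zc \<phi> = m")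
    case False
    then have lt: "zc \<phi> < m" using zi im by simp
    have p: "0 < fn \<phi> (zc \<phi>)" using zc_pos lt s by simp
    have mono: "fn \<phi> (zc \<phi>) \<le> fn \<phi> (Suc (zc \<phi>))" using v lt s unfolding valid_mor_def by simp
    show ?thesis using p mono lt zi by (auto simp: fn_mcomp fn_cf)
  qed simp
qed

lemma K3: assumes s: "src \<phi> = Suc m" and z: "0 < zc \<phi>"
  shows "zc (mcomp \<phi> (cf m 0)) = zc \<phi> - 1"
proof (rule zc_eq)
  have zl: "zc \<phi> \<le> Suc m" using zc_le s by metis
  then show "zc \<phi> - 1 \<le> src (mcomp \<phi> (cf m 0))" by simp
  show "\<forall>j<zc \<phi> - 1. fn (mcomp \<phi> (cf m 0)) j = 0" using zl zc_zero by (auto simp: fn_mcomp fn_cf)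
  show "zc \<phi> - 1 = src (mcomp \<phi> (cf m 0)) \<or> 0 < fn (mcomp \<phi> (cf m 0)) (zc \<phi> - 1)"
  proof (cases "zc \<phi> - 1 = m")
    case False
    then have "zc \<phi> < src \<phi>" using zl s by simp
    then have "0 < fn \<phi> (zc \<phi>)" by (rule zc_pos)
    then show ?thesis using False zl z by (auto simp: fn_mcomp fn_cf)
  qed simp
qed

lemma valid_hh: assumes "valid_mor e" shows "valid_mor (hh e)"
proof -
  have a: "\<forall>i\<le>src e. fn e i \<le> tgt e" "\<forall>i j. i \<le> j \<longrightarrow> j \<le> src e \<longrightarrow> fn e i \<le> fn e j"
    using assms unfolding valid_mor_def by auto
  show ?thesis unfolding valid_mor_def fn_hh src_hh tgt_hh
    using a by (auto simp: le_diff_conv2)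
qed

lemma zc_hh: "zc (hh e) = Suc (zc e)"
proof (rule zc_eq)
  show "Suc (zc e) \<le> src (hh e)" using zc_le by simp
  show "\<forall>i<Suc (zc e). fn (hh e) i = 0" using zc_zero zc_le
    by (auto simp: fn_hh)
  show "Suc (zc e) = src (hh e) \<or> 0 < fn (hh e) (Suc (zc e))"
  proof (cases "zc e = src e")
    case False
    then have "zc e < src e" using zc_le le_neq_implies_less by blast
    then show ?thesis using zc_pos by (simp add: fn_hh)
  qed simp
qed

lemma tau_hh: "valid_mor e \<Longrightarrow> tau (hh e) = e"
  unfolding tau_def by (rule mor_eqI) (auto simp: fn_mcomp fn_cf fn_hh valid_mor_def)

lemma hh_tau: assumes v: "valid_mor \<phi>" and s: "src \<phi> = Suc m" and z: "0 < zc \<phi>"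
  shows "hh (tau \<phi>) = \<phi>"
proof (rule mor_eqI)
  fix k
  have f0: "fn \<phi> 0 = 0" using zc_zero z by blast
  have fo: "\<And>k. Suc m < k \<Longrightarrow> fn \<phi> k = 0" using v s unfolding valid_mor_def by simp
  show "fn (hh (tau \<phi>)) k = fn \<phi> k"
    using f0 fo[of k] s unfolding tau_def
    by (cases k) (auto simp: fn_hh fn_mcomp fn_cf)
qed (simp_all add: tau_def s)

lemma BM_src: "\<phi> \<in> BM \<Longrightarrow> src \<phi> = Suc (src \<phi> - 1)"
  using zc_le[of \<phi>] unfolding BM_def by (cases "src \<phi>") auto

lemma BM_zc: "\<phi> \<in> BM \<Longrightarrow> 0 < zc \<phi>" unfolding BM_def by (auto intro: odd_pos)

lemma tau_BM: assumes "\<phi> \<in> BM" shows "tau \<phi> \<in> EM"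
proof -
  have s: "src \<phi> = Suc (src \<phi> - 1)" by (rule BM_src[OF assms])
  have v: "valid_mor \<phi>" "odd (zc \<phi>)" using assms BM_def by auto
  have "valid_mor (tau \<phi>)" unfolding tau_def
    by (rule valid_mcomp[OF v(1) valid_cf]) (use s in auto)
  moreover have "zc (tau \<phi>) = zc \<phi> - 1" unfolding tau_def by (rule K3[OF s BM_zc[OF assms]])
  ultimately show ?thesis using v(2) BM_zc[OF assms] unfolding EM_def by auto
qed

lemma hh_EM: "e \<in> EM \<Longrightarrow> hh e \<in> BM"
  unfolding EM_def BM_def by (auto simp: valid_hh zc_hh)

lemma hh_tau_BM: assumes p: "\<phi> \<in> BM" shows "hh (tau \<phi>) = \<phi>"
proof -
  have v: "valid_mor \<phi>" using p BM_def by auto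
  show ?thesis by (rule hh_tau[OF v BM_src[OF p] BM_zc[OF p]])
qed

lemma tau_hh_EM: assumes "e \<in> EM" shows "tau (hh e) = e"
proof -
  have v: "valid_mor e" using assms EM_def by auto
  show ?thesis by (rule tau_hh[OF v])
qed

lemma tau_inj: "\<phi> \<in> BM \<Longrightarrow> \<phi>' \<in> BM \<Longrightarrow> tau \<phi> = tau \<phi>' \<Longrightarrow> \<phi> = \<phi>'"
  by (metis hh_tau_BM)

lemma BM_EM_disj: "\<phi> \<in> BM \<Longrightarrow> \<phi> \<notin> EM" unfolding BM_def EM_def by auto

definition DD :: "mor \<Rightarrow> (mor \<Rightarrow> 'k::field)" where "DD \<phi> = dmult (bas \<phi>) (d0 (src \<phi> - 1))"

lemma DD_eq: "src \<phi> = Suc m \<Longrightarrow> DD \<phi> \<psi> = (\<Sum>i\<le>m. if mcomp \<phi> (cf m i) = \<psi> then (-1)^i else (0::'k::field))"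
  unfolding DD_def by (simp add: dmult_d0_right)

lemma alt_sum: "(\<Sum>i<z. (-1::'k::field)^i) = (if odd z then 1 else 0)"
  by (induction z) auto

lemma K5: assumes p: "\<phi> \<in> BM" and e: "e \<in> EM"
  shows "DD \<phi> e = (if e = tau \<phi> then 1 else (0::'k::field))"
proof -
  define m where "m = src \<phi> - 1"
  have s: "src \<phi> = Suc m" using BM_src[OF p] m_def by simp
  have v: "valid_mor \<phi>" "odd (zc \<phi>)" using p BM_def by auto
  have zl: "zc \<phi> \<le> Suc m" using zc_le s by metis
  have tm: "tau \<phi> = mcomp \<phi> (cf m 0)" unfolding tau_def m_def ..
  have split: "{..m} = {..<zc \<phi>} \<union> {zc \<phi>..m}" using zl by auto
  have "DD \<phi> e = (\<Sum>i\<in>{..<zc \<phi>} \<union> {zc \<phi>..m}. if mcomp \<phi> (cf m i) = e then (-1)^i else (0::'k))"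
    unfolding DD_eq[OF s] split[symmetric] ..
  also have "\<dots> = (\<Sum>i\<in>{..<zc \<phi>}. if mcomp \<phi> (cf m i) = e then (-1)^i else 0)
       + (\<Sum>i\<in>{zc \<phi>..m}. if mcomp \<phi> (cf m i) = e then (-1)^i else 0)"
    by (rule sum.union_disjoint) auto
  also have "(\<Sum>i\<in>{zc \<phi>..m}. if mcomp \<phi> (cf m i) = e then (-1)^i else (0::'k)) = 0"
  proof (rule sum.neutral, rule ballI)
    fix i assume i: "i \<in> {zc \<phi>..m}"
    have "zc (mcomp \<phi> (cf m i)) = zc \<phi>" using K2[OF v(1) s] i by auto
    then have "mcomp \<phi> (cf m i) \<noteq> e" using e v(2) unfolding EM_def by auto
    then show "(if mcomp \<phi> (cf m i) = e then (-1)^i else (0::'k)) = 0" by simp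
  qed
  also have "(\<Sum>i\<in>{..<zc \<phi>}. if mcomp \<phi> (cf m i) = e then (-1)^i else (0::'k))
      = (\<Sum>i\<in>{..<zc \<phi>}. if tau \<phi> = e then (-1)^i else 0)"
  proof (rule sum.cong[OF refl])
    fix i assume "i \<in> {..<zc \<phi>}"
    then have iz: "i < zc \<phi>" by simp
    have "mcomp \<phi> (cf m i) = tau \<phi>" using K1[OF s iz] unfolding tm .
    then show "(if mcomp \<phi> (cf m i) = e then (-1)^i else (0::'k)) = (if tau \<phi> = e then (-1)^i else 0)" by simp
  qed
  also have "\<dots> = (if e = tau \<phi> then 1 else 0)" using alt_sum[of "zc \<phi>"] v(2) by auto
  finally show ?thesis by simp
qed

lemma DD_supp: "src \<phi> = Suc m \<Longrightarrow> supp (DD \<phi> :: mor \<Rightarrow> 'k::field) \<subseteq> (\<lambda>i. mcomp \<phi> (cf m i)) ` {..m}"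
proof
  fix \<psi> assume s: "src \<phi> = Suc m" and "\<psi> \<in> supp (DD \<phi> :: mor \<Rightarrow> 'k)"
  then have "DD \<phi> \<psi> \<noteq> (0::'k)" unfolding supp_def by simp
  then have "(\<Sum>i\<le>m. if mcomp \<phi> (cf m i) = \<psi> then (-1)^i else (0::'k)) \<noteq> 0"
    unfolding DD_eq[OF s] .
  then obtain i where "i \<in> {..m}" "(if mcomp \<phi> (cf m i) = \<psi> then (-1)^i else (0::'k)) \<noteq> 0"
    by (rule sum.not_neutral_contains_not_neutral)
  then show "\<psi> \<in> (\<lambda>i. mcomp \<phi> (cf m i)) ` {..m}" by (auto split: if_splits)
qed

lemma DD_fs: "\<phi> \<in> BM \<Longrightarrow> fs (DD \<phi> :: mor \<Rightarrow> 'k::field)"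
  using DD_supp[OF BM_src] finite_subset by blast

lemma DD_valid: assumes "\<phi> \<in> BM" "DD \<phi> \<psi> \<noteq> (0::'k::field)" shows "valid_mor \<psi>"
proof -
  have s: "src \<phi> = Suc (src \<phi> - 1)" by (rule BM_src[OF assms(1)])
  have "\<psi> \<in> supp (DD \<phi> :: mor \<Rightarrow> 'k)" using assms(2) supp_def by fastforce
  then obtain i where i: "i \<le> src \<phi> - 1" "\<psi> = mcomp \<phi> (cf (src \<phi> - 1) i)" using DD_supp[OF s] by blast
  show ?thesis unfolding i(2)
    by (rule valid_mcomp) (use assms(1) BM_def i(1) s valid_cf in auto)
qed

lemma term_lemma: assumes "\<phi> \<in> BM"
  shows "dmult (bas \<phi>) (\<lambda>\<psi>. a * ident (src \<phi>) \<psi> + c * d0 (src \<phi> - 1) \<psi>) = (\<lambda>\<psi>. a * bas \<phi> \<psi> + c * (DD \<phi> \<psi> :: 'k::field))"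
proof -
  have v: "valid_mor \<phi>" using assms BM_def by auto
  have "dmult (bas \<phi>) (ident (src \<phi>)) = (bas \<phi> :: mor \<Rightarrow> 'k)"
    by (simp add: ident_idm dmult_bas_bas mcomp_id_right[OF v])
  then show ?thesis
    by (simp add: dmult_lin_right fs_ident fs_d0 DD_def)
qed



definition BB :: "(mor \<Rightarrow> 'k::field) set" where "BB = bas ` BM"
definition mo :: "(mor \<Rightarrow> 'k::field) \<Rightarrow> mor" where "mo b = (SOME \<phi>. b \<phi> \<noteq> 0)"
definition lab :: "(mor \<Rightarrow> 'k::field) \<Rightarrow> nat" where "lab b = src (mo b)"
definition F0 :: "(mor \<Rightarrow> 'k::field) \<Rightarrow> mor set" where "F0 x = {\<phi>\<in>BM. x (tau \<phi>) \<noteq> 0}"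
definition yy :: "(mor \<Rightarrow> 'k::field) \<Rightarrow> mor \<Rightarrow> 'k" where
  "yy x \<psi> = x \<psi> - (\<Sum>\<phi>'\<in>F0 x. x (tau \<phi>') * DD \<phi>' \<psi>)"
definition WW :: "(mor \<Rightarrow> 'k::field) \<Rightarrow> (mor \<Rightarrow> 'k) \<Rightarrow> (mor \<Rightarrow> 'k)" where
  "WW x b = (if b \<in> BB then (\<lambda>\<psi>. yy x (mo b) * ident (lab b) \<psi> + x (tau (mo b)) * d0 (lab b - 1) \<psi>) else (\<lambda>_. 0))"

lemma mo_bas[simp]: "mo (bas \<phi> :: mor \<Rightarrow> 'k::field) = \<phi>"
  unfolding mo_def bas_def by simp

lemma bas_inj: "inj (bas :: mor \<Rightarrow> mor \<Rightarrow> 'k::field)"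
proof (rule injI)
  fix \<phi> \<psi> assume "bas \<phi> = (bas \<psi> :: mor \<Rightarrow> 'k)"
  then have "bas \<phi> \<phi> = (bas \<psi> \<phi> :: 'k)" by simp
  then show "\<phi> = \<psi>" by (simp add: bas_apply split: if_splits)
qed

lemma WW_bas: "\<phi> \<in> BM \<Longrightarrow> WW x (bas \<phi>) = (\<lambda>\<psi>. yy x \<phi> * ident (src \<phi>) \<psi> + x (tau \<phi>) * d0 (src \<phi> - 1) \<psi>)"
  unfolding WW_def BB_def lab_def by simp

lemma F0_fin: assumes "x \<in> delta_alg" shows "finite (F0 x)"
proof -
  have "F0 x \<subseteq> hh ` supp x"
  proof
    fix \<phi> assume "\<phi> \<in> F0 x"
    then have "\<phi> \<in> BM" "tau \<phi> \<in> supp x" by (auto simp: F0_def supp_def)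
    then show "\<phi> \<in> hh ` supp x" using hh_tau_BM by (metis image_eqI)
  qed
  moreover have "finite (supp x)" using assms delta_alg_def by blast
  ultimately show ?thesis using finite_subset by blast
qed

lemma F0_BM: "F0 x \<subseteq> BM" by (auto simp: F0_def)

lemma yy_BM:
  fixes x :: "mor \<Rightarrow> 'k::field"
  assumes x: "x \<in> delta_alg" and nz: "yy x \<psi> \<noteq> 0" shows "\<psi> \<in> BM"
proof -
  have fin: "finite (F0 x)" by (rule F0_fin[OF x])
  have v: "valid_mor \<psi>"
  proof (rule ccontr)
    assume nv: "\<not> valid_mor \<psi>"
    then have "x \<psi> = 0" using x delta_alg_def by blast
    moreover have "\<And>\<phi>'. \<phi>' \<in> F0 x \<Longrightarrow> DD \<phi>' \<psi> = (0::'k)" using DD_valid nv F0_BM by blast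
    ultimately have "yy x \<psi> = 0" unfolding yy_def by simp
    then show False using nz by simp
  qed
  have "\<psi> \<notin> EM"
  proof
    assume e: "\<psi> \<in> EM"
    have h: "hh \<psi> \<in> BM" "tau (hh \<psi>) = \<psi>" using hh_EM[OF e] tau_hh_EM[OF e] by auto
    have "(\<Sum>\<phi>'\<in>F0 x. x (tau \<phi>') * DD \<phi>' \<psi>) = (\<Sum>\<phi>'\<in>F0 x. if \<phi>' = hh \<psi> then x \<psi> else 0)"
    proof (rule sum.cong[OF refl])
      fix \<phi>' assume p: "\<phi>' \<in> F0 x"
      then have pb: "\<phi>' \<in> BM" using F0_BM by blast
      have "(\<psi> = tau \<phi>') = (\<phi>' = hh \<psi>)" using hh_tau_BM[OF pb] tau_hh_EM[OF e] by metis
      then show "x (tau \<phi>') * DD \<phi>' \<psi> = (if \<phi>' = hh \<psi> then x \<psi> else 0)"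
        using K5[OF pb e] h by auto
    qed
    also have "\<dots> = (if hh \<psi> \<in> F0 x then x \<psi> else 0)" using fin by simp
    also have "\<dots> = x \<psi>" using h by (auto simp: F0_def)
    finally have "yy x \<psi> = 0" unfolding yy_def by simp
    then show False using nz by simp
  qed
  then show ?thesis using v unfolding BM_def EM_def by auto
qed

lemma yy_fs: fixes x :: "mor \<Rightarrow> 'k::field" assumes x: "x \<in> delta_alg" shows "finite (supp (yy x))"
proof -
  have "supp (yy x) \<subseteq> supp x \<union> (\<Union>\<phi>\<in>F0 x. supp (DD \<phi> :: mor \<Rightarrow> 'k))"
  proof
    fix \<psi> assume "\<psi> \<in> supp (yy x)"
    then have "yy x \<psi> \<noteq> 0" by (simp add: supp_def)
    show "\<psi> \<in> supp x \<union> (\<Union>\<phi>\<in>F0 x. supp (DD \<phi> :: mor \<Rightarrow> 'k))"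
    proof (rule ccontr)
      assume "\<psi> \<notin> supp x \<union> (\<Union>\<phi>\<in>F0 x. supp (DD \<phi> :: mor \<Rightarrow> 'k))"
      then have "x \<psi> = 0" "\<And>\<phi>. \<phi> \<in> F0 x \<Longrightarrow> DD \<phi> \<psi> = (0::'k)" by (auto simp: supp_def)
      then have "yy x \<psi> = 0" unfolding yy_def by simp
      with \<open>yy x \<psi> \<noteq> 0\<close> show False by simp
    qed
  qed
  moreover have "finite (supp x \<union> (\<Union>\<phi>\<in>F0 x. supp (DD \<phi> :: mor \<Rightarrow> 'k)))"
    using x delta_alg_def F0_fin[OF x] DD_fs F0_BM by blast
  ultimately show ?thesis using finite_subset by blast
qed

definition Fs :: "(mor \<Rightarrow> 'k::field) \<Rightarrow> mor set" where "Fs x = supp (yy x) \<union> F0 x"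

lemma Fs_fin: assumes "x \<in> delta_alg" shows "finite (Fs x)"
  using yy_fs[OF assms] F0_fin[OF assms] by (simp add: Fs_def)
lemma Fs_BM: "x \<in> delta_alg \<Longrightarrow> Fs x \<subseteq> BM" using yy_BM F0_BM unfolding Fs_def supp_def by blast

lemma repr:
  fixes x :: "mor \<Rightarrow> 'k::field"
  assumes x: "x \<in> delta_alg"
  shows "x \<psi> = (\<Sum>\<phi>\<in>Fs x. yy x \<phi> * bas \<phi> \<psi> + x (tau \<phi>) * DD \<phi> \<psi>)"
proof -
  have fin: "finite (Fs x)" by (rule Fs_fin[OF x])
  have "(\<Sum>\<phi>\<in>Fs x. yy x \<phi> * bas \<phi> \<psi>) = (\<Sum>\<phi>\<in>Fs x. if \<phi> = \<psi> then yy x \<psi> else 0)"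
    by (intro sum.cong refl) (auto simp: bas_apply)
  also have "\<dots> = yy x \<psi>" using fin by (auto simp: Fs_def supp_def)
  finally have s1: "(\<Sum>\<phi>\<in>Fs x. yy x \<phi> * bas \<phi> \<psi>) = yy x \<psi>" .
  have s2: "(\<Sum>\<phi>\<in>Fs x. x (tau \<phi>) * DD \<phi> \<psi>) = (\<Sum>\<phi>\<in>F0 x. x (tau \<phi>) * DD \<phi> \<psi>)"
    by (rule sum.mono_neutral_right) (use fin Fs_BM[OF x] in \<open>auto simp: Fs_def F0_def\<close>)
  have "(\<Sum>\<phi>\<in>Fs x. yy x \<phi> * bas \<phi> \<psi> + x (tau \<phi>) * DD \<phi> \<psi>) = yy x \<psi> + (\<Sum>\<phi>\<in>F0 x. x (tau \<phi>) * DD \<phi> \<psi>)"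
    by (simp only: sum.distrib s1 s2)
  then show ?thesis by (simp add: yy_def)
qed

lemma dmult_nz:
  fixes x w :: "mor \<Rightarrow> 'k::field"
  assumes "dmult x w \<psi> \<noteq> 0"
  obtains \<phi> \<chi> where "x \<phi> \<noteq> 0" "w \<chi> \<noteq> 0" "tgt \<chi> = src \<phi>" "mcomp \<phi> \<chi> = \<psi>"
proof -
  from assms obtain \<phi> where p: "\<phi> \<in> supp x" "(\<Sum>\<chi>\<in>supp w. if tgt \<chi> = src \<phi> \<and> mcomp \<phi> \<chi> = \<psi> then x \<phi> * w \<chi> else 0) \<noteq> 0"
    unfolding dmult_def by (rule sum.not_neutral_contains_not_neutral)
  from p(2) obtain \<chi> where c: "\<chi> \<in> supp w" "(if tgt \<chi> = src \<phi> \<and> mcomp \<phi> \<chi> = \<psi> then x \<phi> * w \<chi> else 0) \<noteq> 0"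
    by (rule sum.not_neutral_contains_not_neutral)
  from c(2) have "x \<phi> \<noteq> 0" "w \<chi> \<noteq> 0" "tgt \<chi> = src \<phi>" "mcomp \<phi> \<chi> = \<psi>" by (auto split: if_splits)
  then show ?thesis using that by blast
qed

lemma dmult_delta:
  fixes x w :: "mor \<Rightarrow> 'k::field"
  assumes x: "x \<in> delta_alg" and w: "w \<in> Omega" shows "dmult x w \<in> delta_alg"
proof -
  have P: "PP w" using QQ_PP Omega_QQ w by blast
  have vw: "valid_mor \<chi>" if "w \<chi> \<noteq> 0" for \<chi>
  proof -
    have "(\<exists>n. \<chi> = idm n) \<or> (\<exists>n i. i \<le> n \<and> \<chi> = cf n i)" using P that unfolding PP_def by blast
    then show ?thesis using valid_idm valid_cf le_SucI by blast
  qed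
  have vx: "valid_mor \<phi>" if "x \<phi> \<noteq> 0" for \<phi> using x that delta_alg_def by blast
  have sub: "supp (dmult x w) \<subseteq> (\<lambda>(\<phi>,\<chi>). mcomp \<phi> \<chi>) ` (supp x \<times> supp w)"
  proof
    fix \<psi> assume "\<psi> \<in> supp (dmult x w)"
    then have "dmult x w \<psi> \<noteq> 0" by (simp add: supp_def)
    then obtain \<phi> \<chi> where "x \<phi> \<noteq> 0" "w \<chi> \<noteq> 0" "mcomp \<phi> \<chi> = \<psi>" by (rule dmult_nz)
    then show "\<psi> \<in> (\<lambda>(\<phi>,\<chi>). mcomp \<phi> \<chi>) ` (supp x \<times> supp w)" by (force simp: supp_def)
  qed
  have fin: "finite (supp (dmult x w))"
    by (rule finite_subset[OF sub]) (use x P in \<open>auto simp: delta_alg_def PP_def\<close>)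
  have val: "valid_mor \<psi>" if nz: "dmult x w \<psi> \<noteq> 0" for \<psi>
  proof -
    obtain \<phi> \<chi> where c: "x \<phi> \<noteq> 0" "w \<chi> \<noteq> 0" "tgt \<chi> = src \<phi>" "mcomp \<phi> \<chi> = \<psi>" using nz by (rule dmult_nz)
    show ?thesis unfolding c(4)[symmetric] by (rule valid_mcomp[OF vx[OF c(1)] vw[OF c(2)] c(3)])
  qed
  show ?thesis unfolding delta_alg_def using fin val by blast
qed



lemma WW_cond:
  fixes x :: "mor \<Rightarrow> 'k::field" assumes x: "x \<in> delta_alg"
  shows "(\<forall>b. b \<notin> BB \<longrightarrow> WW x b = (\<lambda>_. 0)) \<and> finite {b\<in>BB. WW x b \<noteq> (\<lambda>_. 0)} \<and>
    (\<forall>b\<in>BB. WW x b \<in> Omega \<and> dmult (ident (lab b)) (WW x b) = WW x b) \<and>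
    x = (\<lambda>\<psi>. \<Sum>b\<in>{b\<in>BB. WW x b \<noteq> (\<lambda>_. 0)}. dmult b (WW x b) \<psi>)"
proof (intro conjI)
  define S' where "S' = {\<phi>\<in>BM. WW x (bas \<phi>) \<noteq> (\<lambda>_. 0)}"
  have seq: "{b\<in>BB. WW x b \<noteq> (\<lambda>_. 0)} = bas ` S'" unfolding S'_def BB_def by auto
  have sub: "S' \<subseteq> Fs x"
  proof
    fix \<phi> assume p: "\<phi> \<in> S'"
    then have pb: "\<phi> \<in> BM" by (simp add: S'_def)
    show "\<phi> \<in> Fs x"
    proof (rule ccontr)
      assume "\<phi> \<notin> Fs x"
      then have "yy x \<phi> = 0" "x (tau \<phi>) = 0" using pb by (auto simp: Fs_def supp_def F0_def)
      then have "WW x (bas \<phi>) = (\<lambda>_. 0)" unfolding WW_bas[OF pb] by simp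
      then show False using p by (simp add: S'_def)
    qed
  qed
  have fin: "finite (Fs x)" by (rule Fs_fin[OF x])
  have injb: "inj_on (bas :: mor \<Rightarrow> mor \<Rightarrow> 'k) S'" using bas_inj inj_on_subset by blast
  show "\<forall>b. b \<notin> BB \<longrightarrow> WW x b = (\<lambda>_. 0)" by (simp add: WW_def)
  show "finite {b\<in>BB. WW x b \<noteq> (\<lambda>_. 0)}" unfolding seq
    using finite_subset[OF sub fin] by simp
  show "\<forall>b\<in>BB. WW x b \<in> Omega \<and> dmult (ident (lab b)) (WW x b) = WW x b"
  proof
    fix b :: "mor \<Rightarrow> 'k" assume "b \<in> BB"
    then obtain \<phi> where pb: "\<phi> \<in> BM" and b: "b = bas \<phi>" by (auto simp: BB_def)
    obtain m where sm: "src \<phi> = Suc m" using BM_src[OF pb] by blast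
    have lb: "lab b = src \<phi>" by (simp add: b lab_def)
    have om: "WW x b \<in> Omega" unfolding b WW_bas[OF pb]
      by (rule Omega.add[OF Omega.smult[OF Omega.gen_id] Omega.smult[OF Omega.gen_d]])
    have "dmult (ident (src \<phi>)) (WW x b) = WW x b" unfolding b WW_bas[OF pb] sm
      by (simp add: dmult_lin_right fs_ident fs_d0 gp1 gp2)
    then show "WW x b \<in> Omega \<and> dmult (ident (lab b)) (WW x b) = WW x b" using om lb by simp
  qed
  show "x = (\<lambda>\<psi>. \<Sum>b\<in>{b\<in>BB. WW x b \<noteq> (\<lambda>_. 0)}. dmult b (WW x b) \<psi>)"
  proof (rule ext)
    fix \<psi>
    have "(\<Sum>b\<in>{b\<in>BB. WW x b \<noteq> (\<lambda>_. 0)}. dmult b (WW x b) \<psi>) = (\<Sum>\<phi>\<in>S'. dmult (bas \<phi>) (WW x (bas \<phi>)) \<psi>)"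
      unfolding seq by (simp add: sum.reindex[OF injb])
    also have "\<dots> = (\<Sum>\<phi>\<in>Fs x. dmult (bas \<phi>) (WW x (bas \<phi>)) \<psi>)"
    proof (rule sum.mono_neutral_left[OF fin sub], rule ballI)
      fix \<phi> assume p: "\<phi> \<in> Fs x - S'"
      then have "\<phi> \<in> BM" using Fs_BM[OF x] by blast
      with p have "WW x (bas \<phi>) = (\<lambda>_. 0)" by (simp add: S'_def)
      then show "dmult (bas \<phi>) (WW x (bas \<phi>)) \<psi> = 0" by simp
    qed
    also have "\<dots> = (\<Sum>\<phi>\<in>Fs x. yy x \<phi> * bas \<phi> \<psi> + x (tau \<phi>) * DD \<phi> \<psi>)"
    proof (rule sum.cong[OF refl])
      fix \<phi> assume "\<phi> \<in> Fs x"
      then have pb: "\<phi> \<in> BM" using Fs_BM[OF x] by blast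
      show "dmult (bas \<phi>) (WW x (bas \<phi>)) \<psi> = yy x \<phi> * bas \<phi> \<psi> + x (tau \<phi>) * DD \<phi> \<psi>"
        unfolding WW_bas[OF pb] term_lemma[OF pb] by simp
    qed
    also have "\<dots> = x \<psi>" by (rule repr[OF x, symmetric])
    finally show "x \<psi> = (\<Sum>b\<in>{b\<in>BB. WW x b \<noteq> (\<lambda>_. 0)}. dmult b (WW x b) \<psi>)" by (rule sym)
  qed
qed

lemma WW_uniq:
  fixes x :: "mor \<Rightarrow> 'k::field" and w :: "(mor \<Rightarrow> 'k) \<Rightarrow> (mor \<Rightarrow> 'k)"
  assumes x: "x \<in> delta_alg"
    and h1: "\<forall>b. b \<notin> BB \<longrightarrow> w b = (\<lambda>_. 0)"
    and h2: "finite {b\<in>BB. w b \<noteq> (\<lambda>_. 0)}"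
    and h3: "\<forall>b\<in>BB. w b \<in> Omega \<and> dmult (ident (lab b)) (w b) = w b"
    and h4: "x = (\<lambda>\<psi>. \<Sum>b\<in>{b\<in>BB. w b \<noteq> (\<lambda>_. 0)}. dmult b (w b) \<psi>)"
  shows "w = WW x"
proof -
  define A where "A \<phi> = w (bas \<phi>) (idm (src \<phi>))" for \<phi>
  define C where "C \<phi> = w (bas \<phi>) (cf (src \<phi> - 1) 0)" for \<phi>
  have wform: "w (bas \<phi>) = (\<lambda>\<psi>. A \<phi> * ident (src \<phi>) \<psi> + C \<phi> * d0 (src \<phi> - 1) \<psi>)" if pb: "\<phi> \<in> BM" for \<phi>
  proof -
    have bb: "(bas \<phi> :: mor \<Rightarrow> 'k) \<in> BB" using pb by (simp add: BB_def)
    obtain m where s: "src \<phi> = Suc m" using BM_src[OF pb] by blast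
    have P: "PP (w (bas \<phi>))" using h3 bb QQ_PP Omega_QQ by blast
    have "dmult (ident (lab (bas \<phi> :: mor \<Rightarrow> 'k))) (w (bas \<phi>)) = w (bas \<phi>)" using h3 bb by blast
    then have "dmult (ident (Suc m)) (w (bas \<phi>)) = w (bas \<phi>)" by (simp add: lab_def s)
    from L4[OF P this] show ?thesis unfolding A_def C_def s by simp
  qed
  define Sw where "Sw = {\<phi>\<in>BM. w (bas \<phi>) \<noteq> (\<lambda>_. 0)}"
  have seq: "{b\<in>BB. w b \<noteq> (\<lambda>_. 0)} = bas ` Sw" unfolding Sw_def BB_def by auto
  have injb: "inj_on (bas :: mor \<Rightarrow> mor \<Rightarrow> 'k) Sw" using bas_inj inj_on_subset by blast
  have finSw: "finite Sw" using h2 unfolding seq using finite_imageD[OF _ injb] by blast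
  have SwBM: "Sw \<subseteq> BM" by (auto simp: Sw_def)
  have xrep: "x \<psi> = (\<Sum>\<phi>\<in>Sw. A \<phi> * bas \<phi> \<psi> + C \<phi> * DD \<phi> \<psi>)" for \<psi>
  proof -
    have "x \<psi> = (\<Sum>b\<in>bas ` Sw. dmult b (w b) \<psi>)" using fun_cong[OF h4, of \<psi>] unfolding seq .
    also have "\<dots> = (\<Sum>\<phi>\<in>Sw. dmult (bas \<phi>) (w (bas \<phi>)) \<psi>)" by (simp add: sum.reindex[OF injb])
    also have "\<dots> = (\<Sum>\<phi>\<in>Sw. A \<phi> * bas \<phi> \<psi> + C \<phi> * DD \<phi> \<psi>)"
    proof (rule sum.cong[OF refl])
      fix \<phi> assume "\<phi> \<in> Sw"
      then have pb: "\<phi> \<in> BM" using SwBM by blast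
      show "dmult (bas \<phi>) (w (bas \<phi>)) \<psi> = A \<phi> * bas \<phi> \<psi> + C \<phi> * DD \<phi> \<psi>"
        unfolding wform[OF pb] term_lemma[OF pb] by simp
    qed
    finally show ?thesis .
  qed
  have zero: "A \<phi> = 0 \<and> C \<phi> = 0" if "\<phi> \<in> BM" "\<phi> \<notin> Sw" for \<phi>
    using that by (auto simp: Sw_def A_def C_def)
  have Ceq: "C \<phi>0 = x (tau \<phi>0)" if p0: "\<phi>0 \<in> BM" for \<phi>0
  proof -
    have e0: "tau \<phi>0 \<in> EM" by (rule tau_BM[OF p0])
    have "x (tau \<phi>0) = (\<Sum>\<phi>\<in>Sw. if \<phi> = \<phi>0 then C \<phi> else 0)"
      unfolding xrep
    proof (rule sum.cong[OF refl])
      fix \<phi> assume "\<phi> \<in> Sw"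
      then have pb: "\<phi> \<in> BM" using SwBM by blast
      have "tau \<phi>0 \<noteq> \<phi>" using BM_EM_disj[OF pb] e0 by blast
      then have b0: "bas \<phi> (tau \<phi>0) = (0::'k)" by (simp add: bas_apply)
      have "(tau \<phi>0 = tau \<phi>) = (\<phi> = \<phi>0)" using tau_inj[OF pb p0] by auto
      show "A \<phi> * bas \<phi> (tau \<phi>0) + C \<phi> * DD \<phi> (tau \<phi>0) = (if \<phi> = \<phi>0 then C \<phi> else 0)"
      proof -
        have d: "DD \<phi> (tau \<phi>0) = (if \<phi> = \<phi>0 then 1 else (0::'k))"
          using K5[OF pb e0] \<open>(tau \<phi>0 = tau \<phi>) = (\<phi> = \<phi>0)\<close> by simp
        show ?thesis using b0 d by (cases "\<phi> = \<phi>0") simp_all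
      qed
    qed
    also have "\<dots> = C \<phi>0" using finSw zero[OF p0] by auto
    finally show ?thesis by simp
  qed
  have F0Sw: "F0 x \<subseteq> Sw"
  proof
    fix \<phi> assume "\<phi> \<in> F0 x"
    then have pb: "\<phi> \<in> BM" and nz: "x (tau \<phi>) \<noteq> 0" by (auto simp: F0_def)
    show "\<phi> \<in> Sw" using zero[OF pb] Ceq[OF pb] nz by auto
  qed
  have Aeq: "A \<phi>0 = yy x \<phi>0" if p0: "\<phi>0 \<in> BM" for \<phi>0
  proof -
    have "(\<Sum>\<phi>\<in>Sw. A \<phi> * bas \<phi> \<phi>0) = (\<Sum>\<phi>\<in>Sw. if \<phi> = \<phi>0 then A \<phi> else 0)"
      by (intro sum.cong refl) (auto simp: bas_apply)
    also have "\<dots> = A \<phi>0" using finSw zero[OF p0] by auto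
    finally have s1: "(\<Sum>\<phi>\<in>Sw. A \<phi> * bas \<phi> \<phi>0) = A \<phi>0" .
    have "(\<Sum>\<phi>\<in>Sw. C \<phi> * DD \<phi> \<phi>0) = (\<Sum>\<phi>\<in>Sw. x (tau \<phi>) * DD \<phi> \<phi>0)"
      using Ceq SwBM by (intro sum.cong refl) auto
    also have "\<dots> = (\<Sum>\<phi>\<in>F0 x. x (tau \<phi>) * DD \<phi> \<phi>0)"
      by (rule sum.mono_neutral_right[OF finSw F0Sw]) (use SwBM in \<open>auto simp: F0_def\<close>)
    finally have s2: "(\<Sum>\<phi>\<in>Sw. C \<phi> * DD \<phi> \<phi>0) = (\<Sum>\<phi>\<in>F0 x. x (tau \<phi>) * DD \<phi> \<phi>0)" .
    have "x \<phi>0 = A \<phi>0 + (\<Sum>\<phi>\<in>F0 x. x (tau \<phi>) * DD \<phi> \<phi>0)"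
      unfolding xrep[of \<phi>0] sum.distrib s1 s2 ..
    then show ?thesis unfolding yy_def by simp
  qed
  show ?thesis
  proof (rule ext)
    fix b :: "mor \<Rightarrow> 'k"
    show "w b = WW x b"
    proof (cases "b \<in> BB")
      case True
      then obtain \<phi> where pb: "\<phi> \<in> BM" and b: "b = bas \<phi>" by (auto simp: BB_def)
      show ?thesis unfolding b wform[OF pb] WW_bas[OF pb] Aeq[OF pb] Ceq[OF pb] ..
    next
      case False
      then show ?thesis using h1 by (simp add: WW_def)
    qed
  qed
qed

theorem mainTheorem3:
  shows "free_right_Omega_module (delta_alg :: (mor \<Rightarrow> 'k::field) set)"
  unfolding free_right_Omega_module_def
proof (intro conjI)
  show "\<forall>x\<in>(delta_alg :: (mor \<Rightarrow> 'k) set). \<forall>w\<in>Omega. dmult x w \<in> delta_alg"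
    using dmult_delta by blast
  show "\<exists>B lab. B \<subseteq> (delta_alg :: (mor \<Rightarrow> 'k) set) \<and> (\<forall>b\<in>B. dmult b (ident (lab b)) = b) \<and>
      (\<forall>x\<in>delta_alg. \<exists>!w :: (mor \<Rightarrow> 'k) \<Rightarrow> (mor \<Rightarrow> 'k).
         (\<forall>b. b \<notin> B \<longrightarrow> w b = (\<lambda>_. 0)) \<and>
         finite {b\<in>B. w b \<noteq> (\<lambda>_. 0)} \<and>
         (\<forall>b\<in>B. w b \<in> Omega \<and> dmult (ident (lab b)) (w b) = w b) \<and>
         x = (\<lambda>\<psi>. \<Sum>b\<in>{b\<in>B. w b \<noteq> (\<lambda>_. 0)}. dmult b (w b) \<psi>))"
  proof (rule exI[of _ BB], rule exI[of _ lab], intro conjI ballI)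
    show "BB \<subseteq> (delta_alg :: (mor \<Rightarrow> 'k) set)"
      by (auto simp: BB_def BM_def delta_alg_def bas_apply split: if_splits)
  next
    fix b :: "mor \<Rightarrow> 'k" assume "b \<in> BB"
    then obtain \<phi> where pb: "\<phi> \<in> BM" and b: "b = bas \<phi>" by (auto simp: BB_def)
    have v: "valid_mor \<phi>" using pb BM_def by auto
    show "dmult b (ident (lab b)) = b"
      by (simp add: b lab_def ident_idm dmult_bas_bas mcomp_id_right[OF v])
  next
    fix x :: "mor \<Rightarrow> 'k" assume x: "x \<in> delta_alg"
    show "\<exists>!w :: (mor \<Rightarrow> 'k) \<Rightarrow> (mor \<Rightarrow> 'k).
         (\<forall>b. b \<notin> BB \<longrightarrow> w b = (\<lambda>_. 0)) \<and>
         finite {b\<in>BB. w b \<noteq> (\<lambda>_. 0)} \<and>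
         (\<forall>b\<in>BB. w b \<in> Omega \<and> dmult (ident (lab b)) (w b) = w b) \<and>
         x = (\<lambda>\<psi>. \<Sum>b\<in>{b\<in>BB. w b \<noteq> (\<lambda>_. 0)}. dmult b (w b) \<psi>)"
    proof (rule ex1I[of _ "WW x"])
      show "(\<forall>b. b \<notin> BB \<longrightarrow> WW x b = (\<lambda>_. 0)) \<and>
         finite {b\<in>BB. WW x b \<noteq> (\<lambda>_. 0)} \<and>
         (\<forall>b\<in>BB. WW x b \<in> Omega \<and> dmult (ident (lab b)) (WW x b) = WW x b) \<and>
         x = (\<lambda>\<psi>. \<Sum>b\<in>{b\<in>BB. WW x b \<noteq> (\<lambda>_. 0)}. dmult b (WW x b) \<psi>)"
        by (rule WW_cond[OF x])
    next
      fix w :: "(mor \<Rightarrow> 'k) \<Rightarrow> (mor \<Rightarrow> 'k)"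
      assume "(\<forall>b. b \<notin> BB \<longrightarrow> w b = (\<lambda>_. 0)) \<and>
         finite {b\<in>BB. w b \<noteq> (\<lambda>_. 0)} \<and>
         (\<forall>b\<in>BB. w b \<in> Omega \<and> dmult (ident (lab b)) (w b) = w b) \<and>
         x = (\<lambda>\<psi>. \<Sum>b\<in>{b\<in>BB. w b \<noteq> (\<lambda>_. 0)}. dmult b (w b) \<psi>)"
      then show "w = WW x" using WW_uniq[OF x] by blast
    qed
  qed
qed


end
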